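(* Let $N\ge 2$ and let $A=(a_{ij})_{N\times N}\in\mathbb{C}_{N\times N}$ be a lower triangular constant matrix. Let $\phi(x,t)=(\phi_1,\dots,\phi_N)^T$ be a vector of $C^\infty$ functions satisfying $$\phi_{xx}=-A\phi,\qquad \phi_t=-4\phi_{xxx}.$$ Let $\sigma_N=(0,\dots,0,1)^T\in\mathbb{C}^N$ be the $N$-th standard unit vector, and define the determinants $$g=|\phi,\ \partial_x\phi,\ \dots,\ \partial_x^{N-2}\phi,\ \sigma_N|,\qquad f=|\phi,\ \partial_x\phi,\ \dots,\ \partial_x^{N-1}\phi|.$$ Then, with $\lambda=-a_{NN}$, the pair $f,g$ satisfies the bilinear Bäcklund transformation $$D_x^2\,f\cdot g=\lambda fg,\qquad (D_x^3+D_t+3\lambda D_x)\,f\cdot g=0.$$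
   Context: Hirota's bilinear operator is defined by $D_x^mD_t^n\,f(x,t)\cdot g(x,t)=(\partial_x-\partial_{x'})^m(\partial_t-\partial_{t'})^n f(x,t)g(x',t')\big|_{x'=x,\,t'=t}$; e.g. $D_x^2 f\cdot g=f_{xx}g-2f_xg_x+fg_{xx}$. A determinant $|v_1,\dots,v_N|$ denotes the determinant of the $N\times N$ matrix with columns $v_1,\dots,v_N$. *)

theory Defs
  imports "HOL-Analysis.Derivative" "Jordan_Normal_Form.Determinant"
begin

definition pdx :: "(real \<Rightarrow> real \<Rightarrow> complex) \<Rightarrow> real \<Rightarrow> real \<Rightarrow> complex" where
  "pdx F = (\<lambda>x t. vector_derivative (\<lambda>y. F y t) (at x))"

definition pdt :: "(real \<Rightarrow> real \<Rightarrow> complex) \<Rightarrow> real \<Rightarrow> real \<Rightarrow> complex" where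
  "pdt F = (\<lambda>x t. vector_derivative (\<lambda>s. F x s) (at t))"

definition pd_word :: "bool list \<Rightarrow> (real \<Rightarrow> real \<Rightarrow> complex) \<Rightarrow> real \<Rightarrow> real \<Rightarrow> complex" where
  "pd_word ws F = foldr (\<lambda>b G. if b then pdx G else pdt G) ws F"

text \<open>C^\<infinity> on R^2: every iterated partial derivative is (Frechet) differentiable
  everywhere as a function of (x,t).\<close>
definition smooth2 :: "(real \<Rightarrow> real \<Rightarrow> complex) \<Rightarrow> bool" where
  "smooth2 F \<longleftrightarrow> (\<forall>ws x t. (\<lambda>p. pd_word ws F (fst p) (snd p)) differentiable (at (x, t)))"

text \<open>Hirota bilinear operator D_x^m D_t^n f . g, expanded by the binomial theorem.\<close>
definition hirota :: "nat \<Rightarrow> nat \<Rightarrow> (real \<Rightarrow> real \<Rightarrow> complex) \<Rightarrow> (real \<Rightarrow> real \<Rightarrow> complex)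
    \<Rightarrow> real \<Rightarrow> real \<Rightarrow> complex" where
  "hirota m n f g x t =
     (\<Sum>k\<le>m. \<Sum>l\<le>n. of_nat (m choose k) * of_nat (n choose l) * (-1) ^ (k + l)
        * (pdx ^^ (m - k)) ((pdt ^^ (n - l)) f) x t * (pdx ^^ k) ((pdt ^^ l) g) x t)"

definition wron_f :: "nat \<Rightarrow> (nat \<Rightarrow> real \<Rightarrow> real \<Rightarrow> complex) \<Rightarrow> real \<Rightarrow> real \<Rightarrow> complex" where
  "wron_f N \<phi> x t = det (mat N N (\<lambda>(i, k). (pdx ^^ k) (\<phi> i) x t))"

definition wron_g :: "nat \<Rightarrow> (nat \<Rightarrow> real \<Rightarrow> real \<Rightarrow> complex) \<Rightarrow> real \<Rightarrow> real \<Rightarrow> complex" where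
  "wron_g N \<phi> x t = det (mat N N (\<lambda>(i, k).
      if k = N - 1 then (if i = N - 1 then 1 else 0) else (pdx ^^ k) (\<phi> i) x t))"

end

theory Submission
  imports Defs "HOL-Analysis.Analysis"
begin

definition D :: "nat \<Rightarrow> (nat \<Rightarrow> nat \<Rightarrow> complex) \<Rightarrow> complex" where
  "D n v = Determinant.det (Matrix.mat n n (\<lambda>(i,k). v k i))"

lemma D_cong:
  assumes "\<And>k i. k < n \<Longrightarrow> i < n \<Longrightarrow> v k i = w k i"
  shows "D n v = D n w"
  unfolding D_def by (rule arg_cong[where f=Determinant.det], rule eq_matI) (auto simp: assms)

lemma D_expand:
  assumes j: "j < n"
  shows "D n (v(j := w)) = (\<Sum>i<n. w i * Determinant.cofactor (Matrix.mat n n (\<lambda>(i,k). v k i)) i j)"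
proof -
  let ?B = "Matrix.mat n n (\<lambda>(i,k). (v(j := w)) k i)"
  let ?M = "Matrix.mat n n (\<lambda>(i,k). v k i)"
  have "D n (v(j := w)) = (\<Sum>i<n. ?B $$ (i,j) * Determinant.cofactor ?B i j)"
    unfolding D_def by (rule laplace_expansion_column[OF _ j]) auto
  also have "\<dots> = (\<Sum>i<n. w i * Determinant.cofactor ?M i j)"
  proof (rule sum.cong[OF refl])
    fix i assume i: "i \<in> {..<n}"
    have "mat_delete ?B i j = mat_delete ?M i j"
      unfolding mat_delete_def by (rule eq_matI) auto
    then show "?B $$ (i,j) * Determinant.cofactor ?B i j = w i * Determinant.cofactor ?M i j"
      using i j unfolding Determinant.cofactor_def by simp
  qed
  finally show ?thesis .
qed

lemma D_lin:
  assumes j: "j < n"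
  shows "D n (v(j := (\<lambda>i. a * w i + b * u i))) = a * D n (v(j := w)) + b * D n (v(j := u))"
  unfolding D_expand[OF j] by (simp add: sum_distrib_left sum.distrib algebra_simps)

lemma D_smult:
  assumes j: "j < n"
  shows "D n (v(j := (\<lambda>i. a * w i))) = a * D n (v(j := w))"
  unfolding D_expand[OF j] by (simp add: sum_distrib_left algebra_simps)

lemma D_zero_col:
  assumes j: "j < n" and "\<And>i. i < n \<Longrightarrow> v j i = 0"
  shows "D n v = 0"
proof -
  have "v = v(j := v j)" by simp
  then have "D n v = D n (v(j := v j))" by simp
  also have "\<dots> = 0" unfolding D_expand[OF j] using assms by simp
  finally show ?thesis .
qed

lemma D_dup:
  assumes j: "j < n" and k: "k < n" and jk: "j \<noteq> k" and eq: "\<And>i. i < n \<Longrightarrow> v j i = v k i"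
  shows "D n v = 0"
  unfolding D_def
  by (rule Determinant.det_identical_columns[OF _ jk j k]) (auto intro!: eq_vecI simp: eq j k)

lemma D_swap:
  assumes j: "j < n" and k: "k < n" and jk: "j \<noteq> k"
  shows "D n (v(j := v k, k := v j)) = - D n v"
proof -
  have "Matrix.mat n n (\<lambda>(i,l). (v(j := v k, k := v j)) l i) = swapcols j k (Matrix.mat n n (\<lambda>(i,l). v l i))"
    by (rule eq_matI) (auto simp: j k)
  then show ?thesis unfolding D_def using det_swapcols[OF j k jk, of "Matrix.mat n n (\<lambda>(i,l). v l i)"] by simp
qed

lemma D_adj:
  assumes i: "i < n" and l: "l < n"
  shows "(\<Sum>k<n. v k i * Determinant.cofactor (Matrix.mat n n (\<lambda>(i,k). v k i)) l k) = (if i = l then D n v else 0)"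
proof -
  let ?M = "Matrix.mat n n (\<lambda>(i,k). v k i)"
  have M: "?M \<in> carrier_mat n n" by simp
  have "(?M * adj_mat ?M) $$ (i,l) = (Determinant.det ?M \<cdot>\<^sub>m 1\<^sub>m n) $$ (i,l)" using adj_mat(2)[OF M] by simp
  moreover have "(?M * adj_mat ?M) $$ (i,l) = (\<Sum>k<n. v k i * Determinant.cofactor ?M l k)"
    using i l unfolding times_mat_def scalar_prod_def adj_mat_def
    by (auto intro!: sum.cong simp: atLeast0LessThan)
  ultimately show ?thesis using i l unfolding D_def by simp
qed

lemma D_cramer:
  assumes i: "i < n"
  shows "D n v * d i = (\<Sum>k<n. D n (v(k := d)) * v k i)"
proof -
  let ?M = "Matrix.mat n n (\<lambda>(i,k). v k i)"
  have "(\<Sum>k<n. D n (v(k := d)) * v k i) = (\<Sum>k<n. \<Sum>l<n. d l * Determinant.cofactor ?M l k * v k i)"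
    by (simp add: D_expand sum_distrib_right)
  also have "\<dots> = (\<Sum>l<n. d l * (\<Sum>k<n. v k i * Determinant.cofactor ?M l k))"
    by (subst sum.swap) (simp add: sum_distrib_left algebra_simps)
  also have "\<dots> = (\<Sum>l<n. d l * (if i = l then D n v else 0))"
    by (rule sum.cong[OF refl]) (simp add: D_adj i)
  also have "\<dots> = D n v * d i" using i by (simp add: if_distrib sum.delta' cong: if_cong)
  finally show ?thesis by simp
qed

lemma D_trace:
  "(\<Sum>j<n. D n (v(j := (\<lambda>i. \<Sum>l<n. B i l * v j l)))) = (\<Sum>i<n. B i i) * D n v"
proof -
  let ?M = "Matrix.mat n n (\<lambda>(i,k). v k i)"
  have "(\<Sum>j<n. D n (v(j := (\<lambda>i. \<Sum>l<n. B i l * v j l))))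
      = (\<Sum>j<n. \<Sum>i<n. \<Sum>l<n. B i l * v j l * Determinant.cofactor ?M i j)"
    by (simp add: D_expand sum_distrib_right)
  also have "\<dots> = (\<Sum>i<n. \<Sum>l<n. B i l * (\<Sum>j<n. v j l * Determinant.cofactor ?M i j))"
  proof -
    have "(\<Sum>j<n. \<Sum>i<n. \<Sum>l<n. B i l * v j l * Determinant.cofactor ?M i j)
       = (\<Sum>i<n. \<Sum>j<n. \<Sum>l<n. B i l * v j l * Determinant.cofactor ?M i j)"
      by (rule sum.swap)
    also have "\<dots> = (\<Sum>i<n. \<Sum>l<n. \<Sum>j<n. B i l * v j l * Determinant.cofactor ?M i j)"
      by (rule sum.cong[OF refl], rule sum.swap)
    finally show ?thesis by (simp add: sum_distrib_left algebra_simps)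
  qed
  also have "\<dots> = (\<Sum>i<n. \<Sum>l<n. B i l * (if l = i then D n v else 0))"
    by (intro sum.cong refl) (simp add: D_adj)
  also have "\<dots> = (\<Sum>i<n. B i i) * D n v"
    by (simp add: if_distrib sum.delta' sum_distrib_right cong: if_cong)
  finally show ?thesis .
qed

lemma D_antisym:
  assumes n: "n \<ge> 2"
  shows "D n (v(n-2 := y, n-1 := x)) = - D n (v(n-2 := x, n-1 := y))"
proof -
  have "D n ((v(n-2 := x, n-1 := y))(n-2 := (v(n-2 := x, n-1 := y)) (n-1), n-1 := (v(n-2 := x, n-1 := y)) (n-2)))
        = - D n (v(n-2 := x, n-1 := y))"
    by (rule D_swap) (use n in auto)
  moreover have "(v(n-2 := x, n-1 := y))(n-2 := (v(n-2 := x, n-1 := y)) (n-1), n-1 := (v(n-2 := x, n-1 := y)) (n-2))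
     = v(n-2 := y, n-1 := x)" using n by (auto simp: fun_eq_iff)
  ultimately show ?thesis by simp
qed

lemma D_plucker:
  fixes v :: "nat \<Rightarrow> nat \<Rightarrow> complex"
  assumes n: "n \<ge> 2"
  defines "P \<equiv> \<lambda>x y. D n (v(n-2 := x, n-1 := y))"
  shows "P a b * P c d - P a c * P b d + P a d * P b c = 0"
proof -
  define W where "W = v(n-2 := a, n-1 := b)"
  define M where "M = Matrix.mat n n (\<lambda>(i,k). (v(n-2 := c)) k i)"
  have n1: "n - 1 < n" using n by simp
  have ell: "P c y = (\<Sum>i<n. y i * Determinant.cofactor M i (n-1))" for y
    unfolding P_def M_def using D_expand[OF n1, of "v(n-2 := c)" y] by simp
  have "P a b * P c d = (\<Sum>i<n. Determinant.cofactor M i (n-1) * (P a b * d i))"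
    unfolding ell by (simp add: sum_distrib_left algebra_simps)
  also have "\<dots> = (\<Sum>i<n. Determinant.cofactor M i (n-1) * (\<Sum>k<n. D n (W(k := d)) * W k i))"
  proof (rule sum.cong[OF refl])
    fix i assume "i \<in> {..<n}"
    then have "D n W * d i = (\<Sum>k<n. D n (W(k := d)) * W k i)" using D_cramer[of i n W d] by simp
    then show "Determinant.cofactor M i (n-1) * (P a b * d i) = Determinant.cofactor M i (n-1) * (\<Sum>k<n. D n (W(k := d)) * W k i)"
      unfolding P_def W_def by simp
  qed
  also have "\<dots> = (\<Sum>k<n. D n (W(k := d)) * (\<Sum>i<n. W k i * Determinant.cofactor M i (n-1)))"
  proof -
    have "(\<Sum>i<n. Determinant.cofactor M i (n-1) * (\<Sum>k<n. D n (W(k := d)) * W k i))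
        = (\<Sum>i<n. \<Sum>k<n. D n (W(k := d)) * (W k i * Determinant.cofactor M i (n-1)))"
      by (simp add: sum_distrib_left algebra_simps)
    also have "\<dots> = (\<Sum>k<n. \<Sum>i<n. D n (W(k := d)) * (W k i * Determinant.cofactor M i (n-1)))"
      by (rule sum.swap)
    finally show ?thesis by (simp add: sum_distrib_left)
  qed
  also have "\<dots> = (\<Sum>k<n. D n (W(k := d)) * P c (W k))"
    unfolding ell by simp
  also have "\<dots> = (\<Sum>k\<in>{n-2, n-1}. D n (W(k := d)) * P c (W k))"
  proof (rule sum.mono_neutral_right)
    show "\<forall>k\<in>{..<n} - {n-2, n-1}. D n (W(k := d)) * P c (W k) = 0"
    proof
      fix k assume k: "k \<in> {..<n} - {n-2, n-1}"
      have "P c (W k) = 0" unfolding P_def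
        by (rule D_dup[of k n "n-1"]) (use k n in \<open>auto simp: W_def\<close>)
      then show "D n (W(k := d)) * P c (W k) = 0" by simp
    qed
  qed (use n in auto)
  also have "\<dots> = P d b * P c a + P a d * P c b"
  proof -
    have "n - 2 \<noteq> n - 1" using n by simp
    moreover have "W(n-2 := d) = v(n-2 := d, n-1 := b)" unfolding W_def using n by (auto simp: fun_eq_iff)
    moreover have "W(n-1 := d) = v(n-2 := a, n-1 := d)" unfolding W_def by (auto simp: fun_eq_iff)
    moreover have "W (n-2) = a" "W (n-1) = b" unfolding W_def using n by auto
    ultimately show ?thesis unfolding P_def by simp
  qed
  finally have "P a b * P c d = P d b * P c a + P a d * P c b" .
  moreover have "P d b = - P b d" "P c a = - P a c" "P c b = - P b c"
    unfolding P_def by (rule D_antisym[OF n])+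
  ultimately show ?thesis by (simp add: algebra_simps)
qed

lemma D_leibniz:
  "D n w = (\<Sum>p | p permutes {0..<n}. signof p * (\<Prod>j<n. w j (p j)))"
proof -
  have "D n w = (\<Sum>p | p permutes {0..<n}. signof p * (\<Prod>j<n. (Matrix.mat n n (\<lambda>(i,k). w k i)) $$ (p j, j)))"
    unfolding D_def by (rule det_col) simp
  also have "\<dots> = (\<Sum>p | p permutes {0..<n}. signof p * (\<Prod>j<n. w j (p j)))"
    by (intro sum.cong refl arg_cong2[where f="(*)"] prod.cong) (auto simp: permutes_in_image)
  finally show ?thesis .
qed

lemma D_deriv:
  fixes V V' :: "nat \<Rightarrow> real \<Rightarrow> nat \<Rightarrow> complex"
  assumes d: "\<And>k i. k < n \<Longrightarrow> i < n \<Longrightarrow> ((\<lambda>x. V k x i) has_vector_derivative V' k x i) (at x)"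
  shows "((\<lambda>x. D n (\<lambda>k. V k x)) has_vector_derivative (\<Sum>j<n. D n ((\<lambda>k. V k x)(j := V' j x)))) (at x)"
proof -
  let ?P = "{p. p permutes {0..<n}}"
  have der: "((\<lambda>x. \<Sum>p\<in>?P. signof p * (\<Prod>j<n. V j x (p j))) has_derivative
      (\<lambda>h. \<Sum>p\<in>?P. signof p * (\<Sum>j<n. (h *\<^sub>R V' j x (p j)) * (\<Prod>l\<in>{..<n}-{j}. V l x (p l))))) (at x)"
    by (intro has_derivative_sum has_derivative_mult_right has_derivative_prod)
       (use d in \<open>auto simp: has_vector_derivative_def permutes_in_image\<close>)
  have eq: "(\<lambda>h. \<Sum>p\<in>?P. signof p * (\<Sum>j<n. (h *\<^sub>R V' j x (p j)) * (\<Prod>l\<in>{..<n}-{j}. V l x (p l))))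
      = (\<lambda>h. h *\<^sub>R (\<Sum>j<n. D n ((\<lambda>k. V k x)(j := V' j x))))"
  proof
    fix h
    have "(\<Sum>j<n. D n ((\<lambda>k. V k x)(j := V' j x)))
        = (\<Sum>j<n. \<Sum>p\<in>?P. signof p * (V' j x (p j) * (\<Prod>l\<in>{..<n}-{j}. V l x (p l))))"
    proof (rule sum.cong[OF refl])
      fix j assume j: "j \<in> {..<n}"
      have "(\<Prod>l<n. ((\<lambda>k. V k x)(j := V' j x)) l (p l)) = V' j x (p j) * (\<Prod>l\<in>{..<n}-{j}. V l x (p l))" for p
        using j by (subst prod.remove[of _ j]) (auto intro!: prod.cong)
      then show "D n ((\<lambda>k. V k x)(j := V' j x)) = (\<Sum>p\<in>?P. signof p * (V' j x (p j) * (\<Prod>l\<in>{..<n}-{j}. V l x (p l))))"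
        unfolding D_leibniz by simp
    qed
    also have "\<dots> = (\<Sum>p\<in>?P. \<Sum>j<n. signof p * (V' j x (p j) * (\<Prod>l\<in>{..<n}-{j}. V l x (p l))))"
      by (rule sum.swap)
    finally show "(\<Sum>p\<in>?P. signof p * (\<Sum>j<n. (h *\<^sub>R V' j x (p j)) * (\<Prod>l\<in>{..<n}-{j}. V l x (p l))))
      = h *\<^sub>R (\<Sum>j<n. D n ((\<lambda>k. V k x)(j := V' j x)))"
      by (simp add: scaleR_conv_of_real sum_distrib_left algebra_simps)
  qed
  have fe: "(\<lambda>x. D n (\<lambda>k. V k x)) = (\<lambda>x. \<Sum>p\<in>?P. signof p * (\<Prod>j<n. V j x (p j)))"
    by (simp add: D_leibniz)
  show ?thesis
    unfolding has_vector_derivative_def fe by (rule has_derivative_eq_rhs[OF der eq])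
qed

lemma pd_word_append: "pd_word (ws @ vs) F = pd_word ws (pd_word vs F)"
  unfolding pd_word_def by simp

lemma pd_word_simps: "pd_word [] F = F" "pd_word (True # ws) F = pdx (pd_word ws F)"
  "pd_word (False # ws) F = pdt (pd_word ws F)"
  unfolding pd_word_def by simp_all

lemma smooth2_pd: "smooth2 F \<Longrightarrow> smooth2 (pd_word ws F)"
  unfolding smooth2_def by (metis pd_word_append)

lemma smooth2_pdx: "smooth2 F \<Longrightarrow> smooth2 (pdx F)"
  using smooth2_pd[of F "[True]"] by (simp add: pd_word_simps)

lemma smooth2_pdt: "smooth2 F \<Longrightarrow> smooth2 (pdt F)"
  using smooth2_pd[of F "[False]"] by (simp add: pd_word_simps)

lemma smooth2_pdxk: "smooth2 F \<Longrightarrow> smooth2 ((pdx ^^ k) F)"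
  by (induction k) (auto intro: smooth2_pdx)

lemma smooth2_jdiff: "smooth2 F \<Longrightarrow> (\<lambda>p. F (fst p) (snd p)) differentiable (at p)"
  unfolding smooth2_def using pd_word_simps(1)[of F] by (metis prod.collapse)

lemma smooth2_cont: "smooth2 F \<Longrightarrow> continuous_on S (\<lambda>p. F (fst p) (snd p))"
proof -
  assume s: "smooth2 F"
  show ?thesis
    by (rule continuous_at_imp_continuous_on)
       (use differentiable_imp_continuous_within[OF smooth2_jdiff[OF s]] in auto)
qed

lemma smooth2_diffx: "smooth2 F \<Longrightarrow> (\<lambda>y. F y t) differentiable (at x)"
proof -
  assume s: "smooth2 F"
  have "(\<lambda>y. (\<lambda>p. F (fst p) (snd p)) ((\<lambda>y. (y, t)) y)) differentiable (at x)"
    by (rule differentiable_compose[OF smooth2_jdiff[OF s]]) (auto intro!: derivative_intros)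
  then show ?thesis by simp
qed

lemma smooth2_difft: "smooth2 F \<Longrightarrow> (\<lambda>s. F x s) differentiable (at t)"
proof -
  assume s: "smooth2 F"
  have "(\<lambda>y. (\<lambda>p. F (fst p) (snd p)) ((\<lambda>y. (x, y)) y)) differentiable (at t)"
    by (rule differentiable_compose[OF smooth2_jdiff[OF s]]) (auto intro!: derivative_intros)
  then show ?thesis by simp
qed

lemma smooth2_dx: "smooth2 F \<Longrightarrow> ((\<lambda>y. F y t) has_vector_derivative pdx F x t) (at x)"
  unfolding pdx_def using smooth2_diffx vector_derivative_works by blast

lemma smooth2_dt: "smooth2 F \<Longrightarrow> ((\<lambda>s. F x s) has_vector_derivative pdt F x t) (at t)"
  unfolding pdt_def using smooth2_difft vector_derivative_works by blast

lemma schwarz: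
  assumes s: "smooth2 F"
  shows "pdt (pdx F) x0 t0 = pdx (pdt F) x0 t0"
proof -
  define G where "G = pdx F"
  define H where "H = pdt G"
  define a where "a = x0 - 1"
  define b where "b = x0 + 1"
  have sG: "smooth2 G" unfolding G_def by (rule smooth2_pdx[OF s])
  have sH: "smooth2 H" unfolding H_def by (rule smooth2_pdt[OF sG])
  have contG: "continuous_on S (\<lambda>y. G y s)" for S s
  proof -
    have "continuous_on S ((\<lambda>p. G (fst p) (snd p)) \<circ> (\<lambda>y. (y, s)))"
      by (intro continuous_on_compose continuous_intros smooth2_cont[OF sG])
    then show ?thesis by (simp add: o_def)
  qed
  have contH: "continuous_on S (\<lambda>y. H y s)" for S s
  proof -
    have "continuous_on S ((\<lambda>p. H (fst p) (snd p)) \<circ> (\<lambda>y. (y, s)))"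
      by (intro continuous_on_compose continuous_intros smooth2_cont[OF sH])
    then show ?thesis by (simp add: o_def)
  qed
  have contH2: "continuous_on S (\<lambda>(s, y). H y s)" for S
  proof -
    have "continuous_on S ((\<lambda>p. H (fst p) (snd p)) \<circ> (\<lambda>(s,y). (y, s)))"
      by (intro continuous_on_compose continuous_intros smooth2_cont[OF sH]) (auto simp: case_prod_beta intro!: continuous_intros)
    then show ?thesis by (simp add: o_def case_prod_beta)
  qed
  have FTC: "F x s = F a s + integral {a..x} (\<lambda>y. G y s)" if x: "a \<le> x" for x s
  proof -
    have "((\<lambda>y. G y s) has_integral (F x s - F a s)) {a..x}"
      by (rule fundamental_theorem_of_calculus[OF x])
         (auto intro: has_vector_derivative_at_within simp: G_def smooth2_dx[OF s])
    then show ?thesis by (simp add: integral_unique)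
  qed
  have ptF: "pdt F x t = pdt F a t + integral {a..x} (\<lambda>y. H y t)" if x: "a \<le> x" for x t
  proof -
    have l: "((\<lambda>s. integral (cbox a x) (\<lambda>y. G y s)) has_vector_derivative integral (cbox a x) (\<lambda>y. H y t))
        (at t within UNIV)"
      by (rule leibniz_rule_vector_derivative[where fx="\<lambda>s y. H y s"])
         (auto simp: smooth2_dt[OF sG] contH2[unfolded H_def] H_def intro!: integrable_continuous_interval contG)
    have "((\<lambda>s. F x s) has_vector_derivative (pdt F a t + integral {a..x} (\<lambda>y. H y t))) (at t)"
      unfolding FTC[OF x]
      by (intro has_vector_derivative_add smooth2_dt[OF s]) (use l in simp)
    then show ?thesis unfolding pdt_def by (rule vector_derivative_at)
  qed
  have d1: "((\<lambda>u. integral {a..u} (\<lambda>y. H y t0)) has_vector_derivative H x0 t0) (at x0 within {a..b})"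
    by (rule integral_has_vector_derivative[OF contH]) (auto simp: a_def b_def)
  have d2: "((\<lambda>u. integral {a..u} (\<lambda>y. H y t0)) has_vector_derivative H x0 t0) (at x0)"
  proof -
    have sub: "{a<..<b} \<subseteq> {a..b}" by auto
    have x0: "x0 \<in> {a<..<b}" by (simp add: a_def b_def)
    have "((\<lambda>u. integral {a..u} (\<lambda>y. H y t0)) has_vector_derivative H x0 t0) (at x0 within {a<..<b})"
      by (rule has_vector_derivative_within_subset[OF d1 sub])
    then show ?thesis using has_vector_derivative_within_open[OF x0 open_greaterThanLessThan] by blast
  qed
  have d3: "((\<lambda>u. pdt F a t0 + integral {a..u} (\<lambda>y. H y t0)) has_vector_derivative H x0 t0) (at x0)"
    using has_vector_derivative_add[OF has_vector_derivative_const d2] by simp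
  have d4: "((\<lambda>u. pdt F u t0) has_vector_derivative H x0 t0) (at x0)"
  proof (rule has_vector_derivative_transform_within_open[OF d3, of "{a<..<b}"])
    fix y assume "y \<in> {a<..<b}"
    then have "a \<le> y" by simp
    from ptF[OF this, of t0] show "pdt F a t0 + integral {a..y} (\<lambda>y. H y t0) = pdt F y t0" by simp
  qed (auto simp: a_def b_def)
  have "pdx (pdt F) x0 t0 = H x0 t0"
    unfolding pdx_def by (rule vector_derivative_at[OF d4])
  then show ?thesis by (simp add: H_def G_def)
qed

lemma pdx_works: "(\<lambda>y. F y t) differentiable (at x) \<Longrightarrow> ((\<lambda>y. F y t) has_vector_derivative pdx F x t) (at x)"
  unfolding pdx_def using vector_derivative_works by blast

lemma pdx_eqI: "((\<lambda>y. F y t) has_vector_derivative Dv) (at x) \<Longrightarrow> pdx F x t = Dv"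
  unfolding pdx_def by (rule vector_derivative_at)

lemma pdt_eqI: "((\<lambda>s. F x s) has_vector_derivative Dv) (at t) \<Longrightarrow> pdt F x t = Dv"
  unfolding pdt_def by (rule vector_derivative_at)

lemma pdx_lincomb:
  assumes fin: "finite S" and d: "\<And>j. j \<in> S \<Longrightarrow> (\<lambda>y. F j y t) differentiable (at x)"
  shows "pdx (\<lambda>x t. \<Sum>j\<in>S. c j * F j x t) x t = (\<Sum>j\<in>S. c j * pdx (F j) x t)"
  by (rule pdx_eqI, rule has_vector_derivative_sum, rule has_vector_derivative_mult_right, rule pdx_works, rule d)

lemma pdx_add:
  assumes "(\<lambda>y. F y t) differentiable (at x)" "(\<lambda>y. G y t) differentiable (at x)"
  shows "pdx (\<lambda>x t. F x t + G x t) x t = pdx F x t + pdx G x t"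
  by (rule pdx_eqI, rule has_vector_derivative_add, (rule pdx_works, rule assms)+)

lemma pdx_diff:
  assumes "(\<lambda>y. F y t) differentiable (at x)" "(\<lambda>y. G y t) differentiable (at x)"
  shows "pdx (\<lambda>x t. F x t - G x t) x t = pdx F x t - pdx G x t"
  by (rule pdx_eqI, rule has_vector_derivative_diff, (rule pdx_works, rule assms)+)

lemma pdx_cmult:
  assumes "(\<lambda>y. F y t) differentiable (at x)"
  shows "pdx (\<lambda>x t. c * F x t) x t = c * pdx F x t"
  by (rule pdx_eqI, rule has_vector_derivative_mult_right, rule pdx_works, rule assms)

lemma pdx_mult:
  assumes "(\<lambda>y. F y t) differentiable (at x)" "(\<lambda>y. G y t) differentiable (at x)"
  shows "pdx (\<lambda>x t. F x t * G x t) x t = F x t * pdx G x t + pdx F x t * G x t"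
  by (rule pdx_eqI, rule has_vector_derivative_mult, (rule pdx_works, rule assms)+)

lemma pdx_zero: "pdx (\<lambda>x t. 0) x t = 0"
  by (rule pdx_eqI) simp

datatype lab = C nat | Tau | Zer

fun sx :: "lab \<Rightarrow> lab" where
  "sx (C k) = C (Suc k)" | "sx Tau = Zer" | "sx Zer = Zer"

fun st :: "lab \<Rightarrow> lab" where
  "st (C k) = C (k + 3)" | "st Tau = Zer" | "st Zer = Zer"

definition cl :: "nat \<Rightarrow> (nat \<Rightarrow> real \<Rightarrow> real \<Rightarrow> complex) \<Rightarrow> lab \<Rightarrow> real \<Rightarrow> real \<Rightarrow> nat \<Rightarrow> complex" where
  "cl N \<phi> l x t = (case l of C k \<Rightarrow> (\<lambda>i. (pdx ^^ k) (\<phi> i) x t)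
      | Tau \<Rightarrow> (\<lambda>i. if i = N - 1 then 1 else 0) | Zer \<Rightarrow> (\<lambda>i. 0))"

definition Wl :: "nat \<Rightarrow> (nat \<Rightarrow> real \<Rightarrow> real \<Rightarrow> complex) \<Rightarrow> lab list \<Rightarrow> real \<Rightarrow> real \<Rightarrow> complex" where
  "Wl N \<phi> Ls x t = (if length Ls = N then D N (\<lambda>k. cl N \<phi> (Ls ! k) x t) else 0)"

definition Wc :: "nat \<Rightarrow> (nat \<Rightarrow> real \<Rightarrow> real \<Rightarrow> complex) \<Rightarrow> nat \<Rightarrow> lab list \<Rightarrow> real \<Rightarrow> real \<Rightarrow> complex" where
  "Wc N \<phi> m R = Wl N \<phi> (map C [0..<m] @ R)"

lemma Wl_len: "length Ls \<noteq> N \<Longrightarrow> Wl N \<phi> Ls x t = 0"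
  unfolding Wl_def by simp

lemma Wc_len: "m + length R \<noteq> N \<Longrightarrow> Wc N \<phi> m R x t = 0"
  unfolding Wc_def by (rule Wl_len) simp

lemma Wc_Suc: "Wc N \<phi> (Suc m) R = Wc N \<phi> m (C m # R)"
  unfolding Wc_def by simp

lemma Wl_nondistinct:
  assumes "\<not> distinct Ls"
  shows "Wl N \<phi> Ls x t = 0"
proof (cases "length Ls = N")
  case True
  from assms obtain i j where ij: "i < length Ls" "j < length Ls" "i \<noteq> j" "Ls ! i = Ls ! j"
    by (auto simp: distinct_conv_nth)
  show ?thesis unfolding Wl_def using True
    by (simp, intro D_dup[of i N j]) (use ij True in auto)
qed (simp add: Wl_len)

lemma Wl_zer:
  assumes "Zer \<in> set Ls"
  shows "Wl N \<phi> Ls x t = 0"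
proof (cases "length Ls = N")
  case True
  from assms obtain i where i: "i < length Ls" "Ls ! i = Zer" by (auto simp: in_set_conv_nth)
  show ?thesis unfolding Wl_def using True
    by (simp, intro D_zero_col[of i]) (use i True in \<open>auto simp: cl_def\<close>)
qed (simp add: Wl_len)

lemma Wl_swap:
  "Wl N \<phi> (xs @ a # b # ys) x t = - Wl N \<phi> (xs @ b # a # ys) x t"
proof (cases "length (xs @ a # b # ys) = N")
  case True
  let ?v = "\<lambda>k. cl N \<phi> ((xs @ b # a # ys) ! k) x t"
  let ?j = "length xs"
  have "D N (?v(?j := ?v (Suc ?j), Suc ?j := ?v ?j)) = - D N ?v"
    by (rule D_swap) (use True in auto)
  moreover have "?v(?j := ?v (Suc ?j), Suc ?j := ?v ?j) = (\<lambda>k. cl N \<phi> ((xs @ a # b # ys) ! k) x t)"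
  proof
    fix k
    consider "k < ?j" | "k = ?j" | "k = Suc ?j" | "k > Suc ?j" by linarith
    then show "(?v(?j := ?v (Suc ?j), Suc ?j := ?v ?j)) k = cl N \<phi> ((xs @ a # b # ys) ! k) x t"
      by cases (auto simp: nth_append nth_Cons split: nat.splits)
  qed
  ultimately show ?thesis unfolding Wl_def using True by simp
qed (simp add: Wl_len)

locale bt =
  fixes N :: nat and A :: "nat \<Rightarrow> nat \<Rightarrow> complex" and \<phi> :: "nat \<Rightarrow> real \<Rightarrow> real \<Rightarrow> complex"
  assumes N2: "N \<ge> 2"
    and lower: "\<And>i j. i < N \<Longrightarrow> j < N \<Longrightarrow> i < j \<Longrightarrow> A i j = 0"
    and smooth: "\<And>i. i < N \<Longrightarrow> smooth2 (\<phi> i)"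
    and eq_x: "\<And>i x t. i < N \<Longrightarrow> pdx (pdx (\<phi> i)) x t = - (\<Sum>j<N. A i j * \<phi> j x t)"
    and eq_t: "\<And>i x t. i < N \<Longrightarrow> pdt (\<phi> i) x t = - 4 * pdx (pdx (pdx (\<phi> i))) x t"
begin

lemma sm: "i < N \<Longrightarrow> smooth2 ((pdx ^^ k) (\<phi> i))"
  by (rule smooth2_pdxk[OF smooth])

lemma phi_rec: "i < N \<Longrightarrow> (pdx ^^ Suc (Suc k)) (\<phi> i) x t = - (\<Sum>j<N. A i j * (pdx ^^ k) (\<phi> j) x t)"
proof (induction k arbitrary: i x t)
  case 0
  then show ?case using eq_x by simp
next
  case (Suc k)
  have e: "(pdx ^^ Suc (Suc k)) (\<phi> i) = (\<lambda>x t. \<Sum>j<N. (- A i j) * (pdx ^^ k) (\<phi> j) x t)"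
    using Suc by (auto simp: fun_eq_iff sum_negf)
  have "(pdx ^^ Suc (Suc (Suc k))) (\<phi> i) x t = pdx ((pdx ^^ Suc (Suc k)) (\<phi> i)) x t" by simp
  also have "\<dots> = (\<Sum>j<N. (- A i j) * pdx ((pdx ^^ k) (\<phi> j)) x t)"
    unfolding e by (rule pdx_lincomb) (auto intro: smooth2_diffx sm)
  finally show ?case by (simp add: sum_negf)
qed

lemma phi_t: "i < N \<Longrightarrow> pdt ((pdx ^^ k) (\<phi> i)) x t = - 4 * (pdx ^^ Suc (Suc (Suc k))) (\<phi> i) x t"
proof (induction k arbitrary: x t)
  case 0
  then show ?case using eq_t by simp
next
  case (Suc k)
  have e: "pdt ((pdx ^^ k) (\<phi> i)) = (\<lambda>x t. (- 4) * (pdx ^^ Suc (Suc (Suc k))) (\<phi> i) x t)"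
    using Suc by (auto simp: fun_eq_iff)
  have "pdt ((pdx ^^ Suc k) (\<phi> i)) x t = pdt (pdx ((pdx ^^ k) (\<phi> i))) x t" by simp
  also have "\<dots> = pdx (pdt ((pdx ^^ k) (\<phi> i))) x t" by (rule schwarz[OF sm[OF Suc.prems]])
  also have "\<dots> = (- 4) * pdx ((pdx ^^ Suc (Suc (Suc k))) (\<phi> i)) x t"
    unfolding e by (rule pdx_cmult, rule smooth2_diffx, rule sm[OF Suc.prems])
  finally show ?case by simp
qed

end

context bt begin

lemma cl_dx: "i < N \<Longrightarrow> ((\<lambda>y. cl N \<phi> l y t i) has_vector_derivative cl N \<phi> (sx l) x t i) (at x)"
proof (cases l)
  case (C k)
  assume i: "i < N"
  show ?thesis using smooth2_dx[OF sm[OF i, of k], of t x] unfolding C by (simp add: cl_def)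
qed (simp_all add: cl_def)

lemma cl_dt: "i < N \<Longrightarrow> ((\<lambda>s. cl N \<phi> l x s i) has_vector_derivative (- 4) * cl N \<phi> (st l) x t i) (at t)"
proof (cases l)
  case (C k)
  assume i: "i < N"
  show ?thesis using smooth2_dt[OF sm[OF i, of k], of x t] phi_t[OF i, of k x t] unfolding C
    by (simp add: cl_def numeral_3_eq_3)
qed (simp_all add: cl_def)

lemma Wl_dx: "((\<lambda>y. Wl N \<phi> Ls y t) has_vector_derivative (\<Sum>j<N. Wl N \<phi> (Ls[j := sx (Ls ! j)]) x t)) (at x)"
proof (cases "length Ls = N")
  case True
  have d: "((\<lambda>y. D N (\<lambda>k. cl N \<phi> (Ls ! k) y t)) has_vector_derivative
      (\<Sum>j<N. D N ((\<lambda>k. cl N \<phi> (Ls ! k) x t)(j := cl N \<phi> (sx (Ls ! j)) x t)))) (at x)"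
    by (rule D_deriv[where V = "\<lambda>k y. cl N \<phi> (Ls ! k) y t" and V' = "\<lambda>k y. cl N \<phi> (sx (Ls ! k)) y t"])
       (rule cl_dx)
  have e: "D N ((\<lambda>k. cl N \<phi> (Ls ! k) x t)(j := cl N \<phi> (sx (Ls ! j)) x t)) = Wl N \<phi> (Ls[j := sx (Ls ! j)]) x t"
    if j: "j < N" for j
    unfolding Wl_def using True j by (simp, intro D_cong) (auto simp: nth_list_update)
  have s: "(\<Sum>j<N. D N ((\<lambda>k. cl N \<phi> (Ls ! k) x t)(j := cl N \<phi> (sx (Ls ! j)) x t)))
     = (\<Sum>j<N. Wl N \<phi> (Ls[j := sx (Ls ! j)]) x t)" by (rule sum.cong) (auto simp: e)
  have f: "(\<lambda>y. Wl N \<phi> Ls y t) = (\<lambda>y. D N (\<lambda>k. cl N \<phi> (Ls ! k) y t))" using True by (simp add: Wl_def fun_eq_iff)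
  show ?thesis unfolding f s[symmetric] by (rule d)
qed (simp add: Wl_len)

lemma Wl_dt: "((\<lambda>s. Wl N \<phi> Ls x s) has_vector_derivative (- 4) * (\<Sum>j<N. Wl N \<phi> (Ls[j := st (Ls ! j)]) x t)) (at t)"
proof (cases "length Ls = N")
  case True
  have d: "((\<lambda>s. D N (\<lambda>k. cl N \<phi> (Ls ! k) x s)) has_vector_derivative
      (\<Sum>j<N. D N ((\<lambda>k. cl N \<phi> (Ls ! k) x t)(j := (\<lambda>i. (- 4) * cl N \<phi> (st (Ls ! j)) x t i))))) (at t)"
    by (rule D_deriv[where V = "\<lambda>k s. cl N \<phi> (Ls ! k) x s" and V' = "\<lambda>k s i. (- 4) * cl N \<phi> (st (Ls ! k)) x s i"])
       (rule cl_dt)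
  have e: "D N ((\<lambda>k. cl N \<phi> (Ls ! k) x t)(j := (\<lambda>i. (- 4) * cl N \<phi> (st (Ls ! j)) x t i)))
      = (- 4) * Wl N \<phi> (Ls[j := st (Ls ! j)]) x t"
    if j: "j < N" for j
  proof -
    have "D N ((\<lambda>k. cl N \<phi> (Ls ! k) x t)(j := (\<lambda>i. (- 4) * cl N \<phi> (st (Ls ! j)) x t i)))
       = (- 4) * D N ((\<lambda>k. cl N \<phi> (Ls ! k) x t)(j := cl N \<phi> (st (Ls ! j)) x t))"
      by (rule D_smult[OF j])
    also have "D N ((\<lambda>k. cl N \<phi> (Ls ! k) x t)(j := cl N \<phi> (st (Ls ! j)) x t)) = Wl N \<phi> (Ls[j := st (Ls ! j)]) x t"
      unfolding Wl_def using True j by (simp, intro D_cong) (auto simp: nth_list_update)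
    finally show ?thesis .
  qed
  have s: "(\<Sum>j<N. D N ((\<lambda>k. cl N \<phi> (Ls ! k) x t)(j := (\<lambda>i. (- 4) * cl N \<phi> (st (Ls ! j)) x t i))))
     = (- 4) * (\<Sum>j<N. Wl N \<phi> (Ls[j := st (Ls ! j)]) x t)" by (simp only: sum_distrib_left, rule sum.cong[OF refl], rule e, simp)
  have f: "(\<lambda>s. Wl N \<phi> Ls x s) = (\<lambda>s. D N (\<lambda>k. cl N \<phi> (Ls ! k) x s))" using True by (simp add: Wl_def fun_eq_iff)
  show ?thesis unfolding f s[symmetric] by (rule d)
qed (simp add: Wl_len)

lemma pdx_Wl: "pdx (Wl N \<phi> Ls) x t = (\<Sum>j<N. Wl N \<phi> (Ls[j := sx (Ls ! j)]) x t)"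
  by (rule pdx_eqI[OF Wl_dx])

lemma pdt_Wl: "pdt (Wl N \<phi> Ls) x t = (- 4) * (\<Sum>j<N. Wl N \<phi> (Ls[j := st (Ls ! j)]) x t)"
  by (rule pdt_eqI[OF Wl_dt])

lemma Wl_diff: "(\<lambda>y. Wl N \<phi> Ls y t) differentiable (at x)"
  using Wl_dx differentiableI_vector by blast

lemma Wc_diff: "(\<lambda>y. Wc N \<phi> m R y t) differentiable (at x)"
  unfolding Wc_def by (rule Wl_diff)

fun s2 :: "lab \<Rightarrow> lab" where
  "s2 (C k) = C (k + 2)" | "s2 Tau = Tau" | "s2 Zer = Zer"

fun coef :: "lab \<Rightarrow> complex" where
  "coef (C k) = -1" | "coef Tau = A (N - 1) (N - 1)" | "coef Zer = 0"

lemma cl_A: "i < N \<Longrightarrow> (\<Sum>l<N. A i l * cl N \<phi> lb x t l) = coef lb * cl N \<phi> (s2 lb) x t i"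
proof (cases lb)
  case (C k)
  assume i: "i < N"
  show ?thesis using phi_rec[OF i, of k x t] unfolding C by (simp add: cl_def)
next
  case Tau
  assume i: "i < N"
  have "(\<Sum>l<N. A i l * (if l = N - 1 then 1 else 0)) = A i (N - 1)"
    using N2 by (simp add: if_distrib sum.delta' cong: if_cong)
  also have "\<dots> = (if i = N - 1 then A (N - 1) (N - 1) else 0)"
    using lower[of i "N - 1"] i N2 by auto
  finally show ?thesis unfolding Tau by (simp add: cl_def)
qed (simp add: cl_def)


lemma Wl_trace:
  assumes len: "length Ls = N"
  shows "(\<Sum>j<N. coef (Ls ! j) * Wl N \<phi> (Ls[j := s2 (Ls ! j)]) x t) = (\<Sum>i<N. A i i) * Wl N \<phi> Ls x t"
proof -
  let ?v = "\<lambda>k. cl N \<phi> (Ls ! k) x t"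
  have "(\<Sum>i<N. A i i) * Wl N \<phi> Ls x t = (\<Sum>j<N. D N (?v(j := (\<lambda>i. \<Sum>l<N. A i l * ?v j l))))"
    unfolding Wl_def using len D_trace[of N ?v A] by simp
  also have "\<dots> = (\<Sum>j<N. coef (Ls ! j) * Wl N \<phi> (Ls[j := s2 (Ls ! j)]) x t)"
  proof (rule sum.cong[OF refl])
    fix j assume j: "j \<in> {..<N}"
    have "D N (?v(j := (\<lambda>i. \<Sum>l<N. A i l * ?v j l))) = D N (?v(j := (\<lambda>i. coef (Ls ! j) * cl N \<phi> (s2 (Ls ! j)) x t i)))"
      by (rule D_cong) (use j in \<open>auto simp: cl_A\<close>)
    also have "\<dots> = coef (Ls ! j) * D N (?v(j := cl N \<phi> (s2 (Ls ! j)) x t))"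
      by (rule D_smult) (use j in auto)
    also have "D N (?v(j := cl N \<phi> (s2 (Ls ! j)) x t)) = Wl N \<phi> (Ls[j := s2 (Ls ! j)]) x t"
      unfolding Wl_def using len j by (simp, intro D_cong) (auto simp: nth_list_update)
    finally show "D N (?v(j := (\<lambda>i. \<Sum>l<N. A i l * ?v j l))) = coef (Ls ! j) * Wl N \<phi> (Ls[j := s2 (Ls ! j)]) x t" .
  qed
  finally show ?thesis by simp
qed


lemma Wc_plucker:
  "Wc N \<phi> m [a, b] x t * Wc N \<phi> m [c, d] x t - Wc N \<phi> m [a, c] x t * Wc N \<phi> m [b, d] x t
   + Wc N \<phi> m [a, d] x t * Wc N \<phi> m [b, c] x t = 0"
proof (cases "m + 2 = N")
  case True
  let ?v = "\<lambda>k. cl N \<phi> (C k) x t"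
  have e: "Wc N \<phi> m [p, q] x t = D N (?v(N-2 := cl N \<phi> p x t, N-1 := cl N \<phi> q x t))" for p q
  proof -
    have "Wc N \<phi> m [p, q] x t = D N (\<lambda>k. cl N \<phi> ((map C [0..<m] @ [p, q]) ! k) x t)"
      unfolding Wc_def Wl_def using True by simp
    also have "\<dots> = D N (?v(N-2 := cl N \<phi> p x t, N-1 := cl N \<phi> q x t))"
    proof (rule D_cong)
      fix k i assume k: "k < N"
      consider "k < m" | "k = m" | "k = Suc m" using k True by linarith
      then show "cl N \<phi> ((map C [0..<m] @ [p, q]) ! k) x t i = (?v(N-2 := cl N \<phi> p x t, N-1 := cl N \<phi> q x t)) k i"
        by cases (use True in \<open>auto simp: nth_append\<close>)
    qed
    finally show ?thesis .
  qed
  show ?thesis unfolding e by (rule D_plucker) (use True in auto)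
qed (simp add: Wc_len)

end

lemma sum_split_add: "(\<Sum>j<m + l. f j) = (\<Sum>j<m. f j) + (\<Sum>p<l. f (m + p))" for l :: nat
  by (induction l) (simp_all add: add.assoc)

lemma upd1: "(map C [0..<Suc j] @ R)[j := l] = map C [0..<j] @ l # R"
  by (simp add: list_update_append)

lemma upd2: "(map C [0..<Suc (Suc j)] @ R)[j := l] = map C [0..<j] @ l # C (Suc j) # R"
  by (simp add: list_update_append)

lemma upd3: "(map C [0..<Suc (Suc (Suc j))] @ R)[j := l] = map C [0..<j] @ l # C (Suc j) # C (Suc (Suc j)) # R"
  by (simp add: list_update_append)

lemma updR: "(map C [0..<m] @ R)[m + p := l] = map C [0..<m] @ R[p := l]"
  by (simp add: list_update_append)

lemma Wl_pre_dup:
  assumes "j + s < m" "0 < s"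
  shows "Wl N \<phi> ((map C [0..<m] @ R)[j := C (j + s)]) x t = 0"
proof (rule Wl_nondistinct)
  let ?L = "(map C [0..<m] @ R)[j := C (j + s)]"
  have "?L ! j = C (j + s)" "?L ! (j + s) = C (j + s)" "j < length ?L" "j + s < length ?L"
    using assms by (auto simp: nth_append)
  moreover have "j \<noteq> j + s" using assms by simp
  ultimately show "\<not> distinct ?L" by (metis nth_eq_iff_index_eq)
qed

lemma Wc_nd: "\<not> distinct R \<Longrightarrow> Wc N \<phi> m R x t = 0"
  unfolding Wc_def by (rule Wl_nondistinct) simp

lemma Wc_zer: "Zer \<in> set R \<Longrightarrow> Wc N \<phi> m R x t = 0"
  unfolding Wc_def by (rule Wl_zer) simp

context bt begin

lemma Wc_dx:
  assumes le: "N \<le> m + length R"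
  shows "pdx (Wc N \<phi> m R) x t = Wc N \<phi> (m - 1) (C m # R) x t + (\<Sum>p<length R. Wc N \<phi> m (R[p := sx (R ! p)]) x t)"
proof (cases "m + length R = N")
  case False
  then have gt: "m + length R > N" using le by simp
  have z: "Wc N \<phi> m R = (\<lambda>x t. 0)" using False by (auto simp: fun_eq_iff Wc_len)
  have "Wc N \<phi> (m - 1) (C m # R) x t = 0" by (rule Wc_len) (use gt in auto)
  moreover have "Wc N \<phi> m (R[p := sx (R ! p)]) x t = 0" for p by (rule Wc_len) (use gt in auto)
  ultimately show ?thesis unfolding z by (simp add: pdx_zero)
next
  case True
  let ?L = "map C [0..<m] @ R"
  have "pdx (Wc N \<phi> m R) x t = (\<Sum>j<m + length R. Wl N \<phi> (?L[j := sx (?L ! j)]) x t)"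
    unfolding Wc_def pdx_Wl True ..
  also have "\<dots> = (\<Sum>j<m. Wl N \<phi> (?L[j := C (Suc j)]) x t) + (\<Sum>p<length R. Wc N \<phi> m (R[p := sx (R ! p)]) x t)"
    unfolding sum_split_add by (simp add: nth_append updR Wc_def)
  also have "(\<Sum>j<m. Wl N \<phi> (?L[j := C (Suc j)]) x t) = Wc N \<phi> (m - 1) (C m # R) x t"
  proof (cases m)
    case 0
    then show ?thesis using True by (simp add: Wc_len)
  next
    case (Suc m')
    have "(\<Sum>j<m'. Wl N \<phi> (?L[j := C (Suc j)]) x t) = 0"
      by (rule sum.neutral) (use Wl_pre_dup[of _ 1 m] Suc in auto)
    then show ?thesis unfolding Suc by (simp add: list_update_append Wc_def)
  qed
  finally show ?thesis .
qed

lemma Wc_dt: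
  assumes len: "m + length R = N" and m: "1 \<le> m" and tau: "set R \<subseteq> {Tau}"
  shows "pdt (Wc N \<phi> m R) x t = (- 4) * (Wc N \<phi> (m - 3) (C (m - 2) # C (m - 1) # C m # R) x t
      - Wc N \<phi> (m - 2) (C (m - 1) # C (m + 1) # R) x t + Wc N \<phi> (m - 1) (C (m + 2) # R) x t)"
proof -
  let ?L = "map C [0..<m] @ R"
  have "pdt (Wc N \<phi> m R) x t = (- 4) * (\<Sum>j<m + length R. Wl N \<phi> (?L[j := st (?L ! j)]) x t)"
    unfolding Wc_def pdt_Wl len ..
  also have "(\<Sum>j<m + length R. Wl N \<phi> (?L[j := st (?L ! j)]) x t) = (\<Sum>j<m. Wl N \<phi> (?L[j := C (j + 3)]) x t)"
  proof -
    have "Wl N \<phi> (?L[m + p := st (?L ! (m + p))]) x t = 0" if p: "p < length R" for p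
    proof -
      have "R ! p = Tau" using tau p nth_mem by blast
      then show ?thesis using p by (intro Wl_zer) (simp add: nth_append set_update_memI)
    qed
    then show ?thesis unfolding sum_split_add by (simp add: nth_append)
  qed
  also have "(\<Sum>j<m. Wl N \<phi> (?L[j := C (j + 3)]) x t) = Wc N \<phi> (m - 3) (C (m - 2) # C (m - 1) # C m # R) x t
      - Wc N \<phi> (m - 2) (C (m - 1) # C (m + 1) # R) x t + Wc N \<phi> (m - 1) (C (m + 2) # R) x t"
  proof -
    consider "m = 1" | "m = 2" | m' where "m = Suc (Suc (Suc m'))" using m
      by (metis One_nat_def Suc_le_D le_SucE le_numeral_Suc numeral_2_eq_2 numerals(1) pred_numeral_simps(2) semiring_norm(26) semiring_norm(27))
    then show ?thesis
    proof cases
      case 1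
      have "Wc N \<phi> 0 (C 0 # C 0 # C 1 # R) x t = 0" by (rule Wc_nd) simp
      moreover have "Wc N \<phi> 0 (C 0 # C 2 # R) x t = 0" by (rule Wc_len) (use len 1 in simp)
      ultimately show ?thesis unfolding 1 using upd1[of 0 R "C 3"] by (simp add: Wc_def eval_nat_numeral)
    next
      case 2
      have "Wc N \<phi> 0 (C 0 # C 1 # C 2 # R) x t = 0" by (rule Wc_len) (use len 2 in simp)
      moreover have "Wl N \<phi> ((map C [0..<2] @ R)[0 := C 3]) x t = - Wc N \<phi> 0 (C 1 # C 3 # R) x t"
        using Wl_swap[of N \<phi> "[]" "C 3" "C 1" R x t] by (simp add: Wc_def numeral_2_eq_2 upd2)
      moreover have "Wl N \<phi> ((map C [0..<2] @ R)[1 := C 4]) x t = Wc N \<phi> 1 (C 4 # R) x t"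
        using upd1[of 1 R "C 4"] by (simp add: Wc_def numeral_2_eq_2)
      ultimately show ?thesis unfolding 2 by (simp add: eval_nat_numeral)
    next
      case 3
      have s: "(\<Sum>j<m. Wl N \<phi> (?L[j := C (j + 3)]) x t) =
          Wl N \<phi> (?L[m' := C (m' + 3)]) x t + Wl N \<phi> (?L[Suc m' := C (Suc m' + 3)]) x t
          + Wl N \<phi> (?L[Suc (Suc m') := C (Suc (Suc m') + 3)]) x t"
      proof -
        have "(\<Sum>j<m'. Wl N \<phi> (?L[j := C (j + 3)]) x t) = 0"
          by (rule sum.neutral) (use Wl_pre_dup[of _ 3 m] 3 in auto)
        then show ?thesis unfolding 3 by simp
      qed
      have a: "Wl N \<phi> (?L[m' := C (m' + 3)]) x t = Wc N \<phi> m' (C (Suc m') # C (Suc (Suc m')) # C (m' + 3) # R) x t"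
        using Wl_swap[of N \<phi> "map C [0..<m']" "C (m' + 3)" "C (Suc m')" "C (Suc (Suc m')) # R" x t]
          Wl_swap[of N \<phi> "map C [0..<m'] @ [C (Suc m')]" "C (m' + 3)" "C (Suc (Suc m'))" "R" x t]
        unfolding 3 upd3 by (simp add: Wc_def)
      have b: "Wl N \<phi> (?L[Suc m' := C (Suc m' + 3)]) x t = - Wc N \<phi> (Suc m') (C (Suc (Suc m')) # C (Suc m' + 3) # R) x t"
        using Wl_swap[of N \<phi> "map C [0..<Suc m']" "C (Suc m' + 3)" "C (Suc (Suc m'))" "R" x t]
          upd2[of "Suc m'" R "C (Suc m' + 3)"]
        unfolding 3 by (simp only: Wc_def)
      have c: "Wl N \<phi> (?L[Suc (Suc m') := C (Suc (Suc m') + 3)]) x t = Wc N \<phi> (Suc (Suc m')) (C (Suc (Suc m') + 3) # R) x t"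
        using upd1[of "Suc (Suc m')" R "C (Suc (Suc m') + 3)"] unfolding 3 by (simp only: Wc_def)
      show ?thesis unfolding s a b c unfolding 3 by (simp add: eval_nat_numeral)
    qed
  qed
  finally show ?thesis .
qed

end

lemma pre2a: "(\<Sum>j<Suc (Suc m'). Wl N \<phi> ((map C [0..<Suc (Suc m')] @ R)[j := C (j + 2)]) x t)
   = Wc N \<phi> (Suc m') (C (m' + 3) # R) x t - Wc N \<phi> m' (C (Suc m') # C (Suc (Suc m')) # R) x t"
proof -
  have z: "(\<Sum>j<m'. Wl N \<phi> ((map C [0..<Suc (Suc m')] @ R)[j := C (j + 2)]) x t) = 0"
    by (rule sum.neutral) (use Wl_pre_dup[of _ 2 "Suc (Suc m')"] in auto)
  have a: "Wl N \<phi> ((map C [0..<Suc (Suc m')] @ R)[m' := C (m' + 2)]) x t = - Wc N \<phi> m' (C (Suc m') # C (Suc (Suc m')) # R) x t"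
    using Wl_swap[of N \<phi> "map C [0..<m']" "C (m' + 2)" "C (Suc m')" R x t] upd2[of m' R "C (m' + 2)"]
    by (simp add: Wc_def)
  have b: "Wl N \<phi> ((map C [0..<Suc (Suc m')] @ R)[Suc m' := C (Suc m' + 2)]) x t = Wc N \<phi> (Suc m') (C (m' + 3) # R) x t"
    using upd1[of "Suc m'" R "C (Suc m' + 2)"] by (simp add: Wc_def eval_nat_numeral)
  show ?thesis using z a b by simp
qed

lemma pre2b: "(\<Sum>j<Suc 0. Wl N \<phi> ((map C [0..<Suc 0] @ R)[j := C (j + 2)]) x t) = Wc N \<phi> 0 (C 2 # R) x t"
  by (simp add: Wc_def eval_nat_numeral)

context bt begin

lemma Wc_trace:
  assumes len: "m + length R = N"
  shows "(\<Sum>i<N. A i i) * Wc N \<phi> m R x t = - (\<Sum>j<m. Wl N \<phi> ((map C [0..<m] @ R)[j := C (j + 2)]) x t)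
     + (\<Sum>p<length R. coef (R ! p) * Wc N \<phi> m (R[p := s2 (R ! p)]) x t)"
proof -
  let ?L = "map C [0..<m] @ R"
  have "(\<Sum>i<N. A i i) * Wc N \<phi> m R x t = (\<Sum>j<m + length R. coef (?L ! j) * Wl N \<phi> (?L[j := s2 (?L ! j)]) x t)"
    unfolding Wc_def using Wl_trace[of ?L x t] len by simp
  also have "\<dots> = - (\<Sum>j<m. Wl N \<phi> (?L[j := C (j + 2)]) x t)
     + (\<Sum>p<length R. coef (R ! p) * Wc N \<phi> m (R[p := s2 (R ! p)]) x t)"
    unfolding sum_split_add by (simp add: nth_append updR Wc_def sum_negf)
  finally show ?thesis .
qed

lemma T1:
  assumes qN: "N = Suc (Suc q)"
  shows "(\<Sum>i<N. A i i) * Wc N \<phi> (Suc (Suc q)) [] x t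
     = Wc N \<phi> q [C (Suc q), C (Suc (Suc q))] x t - Wc N \<phi> (Suc q) [C (q + 3)] x t"
proof -
  note a = Wc_trace[of "Suc (Suc q)" "[]" x t]
  note b = pre2a[of N \<phi> q "[]" x t]
  have c: "(\<Sum>p<length ([]::lab list). coef ([] ! p) * Wc N \<phi> (Suc (Suc q)) ([][p := s2 ([] ! p)]) x t) = 0"
    by simp
  have l: "Suc (Suc q) + length ([]::lab list) = N" using qN by simp
  show ?thesis unfolding a[OF l] b c by simp
qed

lemma T3:
  assumes qN: "N = Suc (Suc q)"
  shows "((\<Sum>i<N. A i i) - A (N - 1) (N - 1)) * Wc N \<phi> (Suc q) [Tau] x t
     = Wc N \<phi> (q - 1) [C q, C (Suc q), Tau] x t - Wc N \<phi> q [C (Suc (Suc q)), Tau] x t"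
proof -
  have c: "(\<Sum>p<length [Tau]. coef ([Tau] ! p) * Wc N \<phi> m ([Tau][p := s2 ([Tau] ! p)]) x t)
     = A (N - 1) (N - 1) * Wc N \<phi> m [Tau] x t" for m
    by simp
  show ?thesis
  proof (cases q)
    case 0
    have z: "Wc N \<phi> (q - 1) [C q, C (Suc q), Tau] x t = 0" by (rule Wc_len) (use qN 0 in simp)
    note a = Wc_trace[of "Suc 0" "[Tau]" x t]
    have l: "Suc 0 + length [Tau] = N" using qN 0 by simp
    note b = pre2b[of N \<phi> "[Tau]" x t]
    have "(\<Sum>i<N. A i i) * Wc N \<phi> (Suc 0) [Tau] x t = - Wc N \<phi> 0 [C 2, Tau] x t + A (N - 1) (N - 1) * Wc N \<phi> (Suc 0) [Tau] x t"
      unfolding a[OF l] b c by simp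
    then show ?thesis using z 0 by (simp add: algebra_simps eval_nat_numeral)
  next
    case (Suc q')
    note a = Wc_trace[of "Suc (Suc q')" "[Tau]" x t]
    have l: "Suc (Suc q') + length [Tau] = N" using qN Suc by simp
    note b = pre2a[of N \<phi> q' "[Tau]" x t]
    have "(\<Sum>i<N. A i i) * Wc N \<phi> (Suc (Suc q')) [Tau] x t = - (Wc N \<phi> (Suc q') (C (q' + 3) # [Tau]) x t - Wc N \<phi> q' (C (Suc q') # C (Suc (Suc q')) # [Tau]) x t) + A (N - 1) (N - 1) * Wc N \<phi> (Suc (Suc q')) [Tau] x t"
      unfolding a[OF l] b c by simp
    then show ?thesis using Suc by (simp add: algebra_simps eval_nat_numeral)
  qed
qed

end

context bt begin

lemma Wc_dx2:
  assumes "N \<le> m + 2"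
  shows "pdx (Wc N \<phi> m [a, b]) x t = Wc N \<phi> (m - 1) [C m, a, b] x t + Wc N \<phi> m [sx a, b] x t + Wc N \<phi> m [a, sx b] x t"
  using Wc_dx[of m "[a, b]" x t] assms by (simp add: numeral_2_eq_2)

lemma Wc_dx3:
  assumes "N \<le> m + 3"
  shows "pdx (Wc N \<phi> m [a, b, c]) x t = Wc N \<phi> (m - 1) [C m, a, b, c] x t + Wc N \<phi> m [sx a, b, c] x t
     + Wc N \<phi> m [a, sx b, c] x t + Wc N \<phi> m [a, b, sx c] x t"
  using Wc_dx[of m "[a, b, c]" x t] assms by (simp add: numeral_3_eq_3)

context
  fixes q assumes qN: "N = Suc (Suc q)"
begin

lemma dF0: "pdx (Wc N \<phi> q [C q, C (Suc q)]) x t = Wc N \<phi> q [C q, C (Suc (Suc q))] x t"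
  using Wc_dx2[of q "C q" "C (Suc q)" x t] qN by (simp add: Wc_nd Wc_zer)

lemma dG0: "pdx (Wc N \<phi> q [C q, Tau]) x t = Wc N \<phi> q [C (Suc q), Tau] x t"
  using Wc_dx2[of q "C q" Tau x t] qN by (simp add: Wc_nd Wc_zer)

lemma dF1: "pdx (Wc N \<phi> q [C q, C (Suc (Suc q))]) x t =
   Wc N \<phi> q [C (Suc q), C (Suc (Suc q))] x t + Wc N \<phi> q [C q, C (Suc (Suc (Suc q)))] x t"
  using Wc_dx2[of q "C q" "C (Suc (Suc q))" x t] qN by (simp add: Wc_nd Wc_zer)

lemma dG1: "pdx (Wc N \<phi> q [C (Suc q), Tau]) x t =
   Wc N \<phi> (q - 1) [C q, C (Suc q), Tau] x t + Wc N \<phi> q [C (Suc (Suc q)), Tau] x t"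
  using Wc_dx2[of q "C (Suc q)" Tau x t] qN by (simp add: Wc_nd Wc_zer)

lemma dF2a: "pdx (Wc N \<phi> q [C (Suc q), C (Suc (Suc q))]) x t =
   Wc N \<phi> (q - 1) [C q, C (Suc q), C (Suc (Suc q))] x t + Wc N \<phi> q [C (Suc q), C (Suc (Suc (Suc q)))] x t"
  using Wc_dx2[of q "C (Suc q)" "C (Suc (Suc q))" x t] qN by (simp add: Wc_nd Wc_zer)

lemma dF2b: "pdx (Wc N \<phi> q [C q, C (Suc (Suc (Suc q)))]) x t =
   Wc N \<phi> q [C (Suc q), C (Suc (Suc (Suc q)))] x t + Wc N \<phi> q [C q, C (Suc (Suc (Suc (Suc q))))] x t"
  using Wc_dx2[of q "C q" "C (Suc (Suc (Suc q)))" x t] qN by (simp add: Wc_nd Wc_zer)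

lemma dG2a: "pdx (Wc N \<phi> (q - 1) [C q, C (Suc q), Tau]) x t =
   Wc N \<phi> (q - 2) [C (q - 1), C q, C (Suc q), Tau] x t + Wc N \<phi> (q - 1) [C q, C (Suc (Suc q)), Tau] x t"
proof -
  have le: "N \<le> q - 1 + 3" using qN by arith
  show ?thesis using Wc_dx3[OF le, of "C q" "C (Suc q)" Tau x t] qN by (simp add: Wc_nd Wc_zer numeral_2_eq_2)
qed

lemma dG2b: "pdx (Wc N \<phi> q [C (Suc (Suc q)), Tau]) x t =
   Wc N \<phi> (q - 1) [C q, C (Suc (Suc q)), Tau] x t + Wc N \<phi> q [C (Suc (Suc (Suc q))), Tau] x t"
  using Wc_dx2[of q "C (Suc (Suc q))" Tau x t] qN by (simp add: Wc_nd Wc_zer)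


abbreviation "W \<equiv> Wc N \<phi>"

lemma wf: "wron_f N \<phi> = W q [C q, C (Suc q)]"
proof (intro ext)
  fix x t
  have "W q [C q, C (Suc q)] = W (Suc (Suc q)) []" by (simp add: Wc_Suc)
  moreover have "wron_f N \<phi> x t = W N [] x t"
    unfolding wron_f_def Wc_def Wl_def D_def
    by (subst if_P, simp, rule arg_cong[where f=Determinant.det], rule eq_matI) (auto simp: cl_def)
  ultimately show "wron_f N \<phi> x t = W q [C q, C (Suc q)] x t" using qN by simp
qed

lemma wg: "wron_g N \<phi> = W q [C q, Tau]"
proof (intro ext)
  fix x t
  have "W q [C q, Tau] = W (Suc q) [Tau]" by (simp add: Wc_Suc)
  moreover have "wron_g N \<phi> x t = W (N - 1) [Tau] x t"
    unfolding wron_g_def Wc_def Wl_def D_def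
    by (subst if_P, use N2 in simp, rule arg_cong[where f=Determinant.det], rule eq_matI) (use N2 in \<open>auto simp: cl_def nth_append\<close>)
  ultimately show "wron_g N \<phi> x t = W q [C q, Tau] x t" using qN by simp
qed

lemma dtf: "pdt (wron_f N \<phi>) x t = (- 4) * (W (q - 1) [C q, C (Suc q), C (Suc (Suc q))] x t
   - W q [C (Suc q), C (Suc (Suc (Suc q)))] x t + W q [C q, C (Suc (Suc (Suc (Suc q))))] x t)"
proof -
  have e: "wron_f N \<phi> = W (Suc (Suc q)) []" unfolding wf by (simp add: Wc_Suc)
  have "pdt (W (Suc (Suc q)) []) x t = (- 4) * (W (Suc (Suc q) - 3) [C (Suc (Suc q) - 2), C (Suc (Suc q) - 1), C (Suc (Suc q))] x t
      - W (Suc (Suc q) - 2) [C (Suc (Suc q) - 1), C (Suc (Suc q) + 1)] x t + W (Suc (Suc q) - 1) [C (Suc (Suc q) + 2)] x t)"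
    by (rule Wc_dt) (use qN in auto)
  then show ?thesis unfolding e by (simp add: Wc_Suc eval_nat_numeral)
qed

lemma dtg: "pdt (wron_g N \<phi>) x t = (- 4) * (W (q - 2) [C (q - 1), C q, C (Suc q), Tau] x t
   - W (q - 1) [C q, C (Suc (Suc q)), Tau] x t + W q [C (Suc (Suc (Suc q))), Tau] x t)"
proof -
  have e: "wron_g N \<phi> = W (Suc q) [Tau]" unfolding wg by (simp add: Wc_Suc)
  have "pdt (W (Suc q) [Tau]) x t = (- 4) * (W (Suc q - 3) [C (Suc q - 2), C (Suc q - 1), C (Suc q), Tau] x t
      - W (Suc q - 2) [C (Suc q - 1), C (Suc q + 1), Tau] x t + W (Suc q - 1) [C (Suc q + 2), Tau] x t)"
    by (rule Wc_dt) (use qN in auto)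
  then show ?thesis unfolding e by (simp add: Wc_Suc eval_nat_numeral)
qed


abbreviation "TT \<equiv> (\<Sum>i<N. A i i)"
abbreviation "aa \<equiv> A (N - 1) (N - 1)"

lemma h1: "TT * W q [C q, C (Suc q)] x t = W q [C (Suc q), C (Suc (Suc q))] x t - W q [C q, C (Suc (Suc (Suc q)))] x t"
  using T1[OF qN, of x t] by (simp add: Wc_Suc eval_nat_numeral)

lemma h3: "(TT - aa) * W q [C q, Tau] x t = W (q - 1) [C q, C (Suc q), Tau] x t - W q [C (Suc (Suc q)), Tau] x t"
  using T3[OF qN, of x t] by (simp add: Wc_Suc)

lemma h2: "TT * W q [C q, C (Suc (Suc q))] x t = W (q - 1) [C q, C (Suc q), C (Suc (Suc q))] x t - W q [C q, C (Suc (Suc (Suc (Suc q))))] x t"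
proof -
  have fe: "(\<lambda>x t. TT * W q [C q, C (Suc q)] x t) = (\<lambda>x t. W q [C (Suc q), C (Suc (Suc q))] x t - W q [C q, C (Suc (Suc (Suc q)))] x t)"
    using h1 by (intro ext) simp
  have "pdx (\<lambda>x t. TT * W q [C q, C (Suc q)] x t) x t = TT * W q [C q, C (Suc (Suc q))] x t"
    by (subst pdx_cmult) (simp_all add: Wc_diff dF0)
  moreover have "pdx (\<lambda>x t. W q [C (Suc q), C (Suc (Suc q))] x t - W q [C q, C (Suc (Suc (Suc q)))] x t) x t
     = W (q - 1) [C q, C (Suc q), C (Suc (Suc q))] x t - W q [C q, C (Suc (Suc (Suc (Suc q))))] x t"
    by (subst pdx_diff) (simp_all add: Wc_diff dF2a dF2b)
  ultimately show ?thesis unfolding fe by simp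
qed

lemma h4: "(TT - aa) * W q [C (Suc q), Tau] x t = W (q - 2) [C (q - 1), C q, C (Suc q), Tau] x t - W q [C (Suc (Suc (Suc q))), Tau] x t"
proof -
  have fe: "(\<lambda>x t. (TT - aa) * W q [C q, Tau] x t) = (\<lambda>x t. W (q - 1) [C q, C (Suc q), Tau] x t - W q [C (Suc (Suc q)), Tau] x t)"
    using h3 by (intro ext) simp
  have "pdx (\<lambda>x t. (TT - aa) * W q [C q, Tau] x t) x t = (TT - aa) * W q [C (Suc q), Tau] x t"
    by (subst pdx_cmult) (simp_all add: Wc_diff dG0)
  moreover have "pdx (\<lambda>x t. W (q - 1) [C q, C (Suc q), Tau] x t - W q [C (Suc (Suc q)), Tau] x t) x t
     = W (q - 2) [C (q - 1), C q, C (Suc q), Tau] x t - W q [C (Suc (Suc (Suc q))), Tau] x t"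
    by (subst pdx_diff) (simp_all add: Wc_diff dG2a[simplified] dG2b)
  ultimately show ?thesis unfolding fe by simp
qed

lemma p1: "W q [C q, C (Suc q)] x t * W q [C (Suc (Suc q)), Tau] x t - W q [C q, C (Suc (Suc q))] x t * W q [C (Suc q), Tau] x t
   + W q [C q, Tau] x t * W q [C (Suc q), C (Suc (Suc q))] x t = 0"
  using Wc_plucker[of q "C q" "C (Suc q)" x t "C (Suc (Suc q))" Tau] by (simp add: algebra_simps)

lemma p2: "W q [C q, C (Suc q)] x t * W q [C (Suc (Suc (Suc q))), Tau] x t - W q [C q, C (Suc (Suc (Suc q)))] x t * W q [C (Suc q), Tau] x t
   + W q [C q, Tau] x t * W q [C (Suc q), C (Suc (Suc (Suc q)))] x t = 0"
  using Wc_plucker[of q "C q" "C (Suc q)" x t "C (Suc (Suc (Suc q)))" Tau] by (simp add: algebra_simps)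

lemma p3: "W q [C q, C (Suc q)] x t * W (q - 1) [C q, C (Suc (Suc q)), Tau] x t
   + W q [C q, C (Suc q)] x t * W q [C (Suc (Suc (Suc q))), Tau] x t
   - W q [C q, C (Suc (Suc (Suc q)))] x t * W q [C (Suc q), Tau] x t
   - W q [C q, C (Suc (Suc q))] x t * W (q - 1) [C q, C (Suc q), Tau] x t
   + W q [C q, Tau] x t * W (q - 1) [C q, C (Suc q), C (Suc (Suc q))] x t
   + W q [C q, Tau] x t * W q [C (Suc q), C (Suc (Suc (Suc q)))] x t = 0"
proof -
  let ?f0 = "W q [C q, C (Suc q)]" and ?G2b = "W q [C (Suc (Suc q)), Tau]" and ?F1 = "W q [C q, C (Suc (Suc q))]"
    and ?G1 = "W q [C (Suc q), Tau]" and ?g0 = "W q [C q, Tau]" and ?F2a = "W q [C (Suc q), C (Suc (Suc q))]"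
  have d: "((\<lambda>y. ?f0 y t * ?G2b y t - ?F1 y t * ?G1 y t + ?g0 y t * ?F2a y t) has_vector_derivative
     (?f0 x t * pdx ?G2b x t + pdx ?f0 x t * ?G2b x t - (?F1 x t * pdx ?G1 x t + pdx ?F1 x t * ?G1 x t)
       + (?g0 x t * pdx ?F2a x t + pdx ?g0 x t * ?F2a x t))) (at x)"
    by (intro has_vector_derivative_add has_vector_derivative_diff has_vector_derivative_mult pdx_works Wc_diff)
  have z: "(\<lambda>y. ?f0 y t * ?G2b y t - ?F1 y t * ?G1 y t + ?g0 y t * ?F2a y t) = (\<lambda>y. 0)"
    using p1 by (intro ext) simp
  have "?f0 x t * pdx ?G2b x t + pdx ?f0 x t * ?G2b x t - (?F1 x t * pdx ?G1 x t + pdx ?F1 x t * ?G1 x t)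
       + (?g0 x t * pdx ?F2a x t + pdx ?g0 x t * ?F2a x t) = 0"
    using d unfolding z by (rule vector_derivative_unique_at) simp
  then show ?thesis by (simp add: dF0 dG0 dF1 dG1 dF2a dG2b algebra_simps)
qed

end
end

lemma alg1:
  fixes f g F1 G1 F2a F2b G2a G2b T a :: complex
  assumes h1: "T * f = F2a - F2b" and h3: "(T - a) * g = G2a - G2b"
    and p1: "f * G2b - F1 * G1 + g * F2a = 0"
  shows "(F2a + F2b) * g - 2 * (F1 * G1) + f * (G2a + G2b) = - a * f * g"
proof -
  have "(F2a + F2b) * g - 2 * (F1 * G1) + f * (G2a + G2b) + a * f * g
      = 2 * (f * G2b - F1 * G1 + g * F2a) + g * (T * f - (F2a - F2b)) - f * ((T - a) * g - (G2a - G2b))"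
    by (simp add: algebra_simps)
  also have "\<dots> = 0" using assms by simp
  finally have e: "(F2a + F2b) * g - 2 * (F1 * G1) + f * (G2a + G2b) + a * f * g = 0" .
  show ?thesis using e by (simp add: eq_neg_iff_add_eq_0)
qed

lemma alg2:
  fixes f g F1 G1 F2a F2b G2a G2b F3a F3b F3c G3a G3b G3c T a :: complex
  assumes h1: "T * f = F2a - F2b" and h2: "T * F1 = F3a - F3c"
    and h3: "(T - a) * g = G2a - G2b" and h4: "(T - a) * G1 = G3a - G3c"
    and p2: "f * G3c - F2b * G1 + g * F3b = 0"
    and p3: "f * G3b + f * G3c - F2b * G1 - F1 * G2a + g * F3a + g * F3b = 0"
  shows "(F3a + 2 * F3b + F3c) * g - 3 * ((F2a + F2b) * G1) + 3 * (F1 * (G2a + G2b))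
     - f * (G3a + 2 * G3b + G3c) + ((- 4) * (F3a - F3b + F3c) * g - f * ((- 4) * (G3a - G3b + G3c)))
     + 3 * (- a) * (F1 * g - f * G1) = 0"
proof -
  have "(F3a + 2 * F3b + F3c) * g - 3 * ((F2a + F2b) * G1) + 3 * (F1 * (G2a + G2b))
     - f * (G3a + 2 * G3b + G3c) + ((- 4) * (F3a - F3b + F3c) * g - f * ((- 4) * (G3a - G3b + G3c)))
     + 3 * (- a) * (F1 * g - f * G1)
     = 3 * (4 * (f * G3c - F2b * G1 + g * F3b) - 2 * (f * G3b + f * G3c - F2b * G1 - F1 * G2a + g * F3a + g * F3b)
        - g * (T * F1 - (F3a - F3c)) - f * ((T - a) * G1 - (G3a - G3c)) + G1 * (T * f - (F2a - F2b))
        + F1 * ((T - a) * g - (G2a - G2b)))"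
    by (simp add: algebra_simps)
  then show ?thesis using assms by simp
qed

context bt begin
context
  fixes q assumes qN: "N = Suc (Suc q)"
begin

lemma FX1: "pdx (W q [C q, C (Suc q)]) = W q [C q, C (Suc (Suc q))]"
  by (intro ext) (rule dF0[OF qN])
lemma FX2: "pdx (W q [C q, C (Suc (Suc q))]) = (\<lambda>x t. W q [C (Suc q), C (Suc (Suc q))] x t + W q [C q, C (Suc (Suc (Suc q)))] x t)"
  by (intro ext) (rule dF1[OF qN])
lemma FX3: "pdx (\<lambda>x t. W q [C (Suc q), C (Suc (Suc q))] x t + W q [C q, C (Suc (Suc (Suc q)))] x t) x t
  = W (q - 1) [C q, C (Suc q), C (Suc (Suc q))] x t + 2 * W q [C (Suc q), C (Suc (Suc (Suc q)))] x t
    + W q [C q, C (Suc (Suc (Suc (Suc q))))] x t"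
  by (subst pdx_add) (simp_all add: Wc_diff dF2a[OF qN] dF2b[OF qN])
lemma GX1: "pdx (W q [C q, Tau]) = W q [C (Suc q), Tau]"
  by (intro ext) (rule dG0[OF qN])
lemma GX2: "pdx (W q [C (Suc q), Tau]) = (\<lambda>x t. W (q - 1) [C q, C (Suc q), Tau] x t + W q [C (Suc (Suc q)), Tau] x t)"
  by (intro ext) (rule dG1[OF qN])
lemma GX3: "pdx (\<lambda>x t. W (q - 1) [C q, C (Suc q), Tau] x t + W q [C (Suc (Suc q)), Tau] x t) x t
  = W (q - 2) [C (q - 1), C q, C (Suc q), Tau] x t + 2 * W (q - 1) [C q, C (Suc (Suc q)), Tau] x t
    + W q [C (Suc (Suc (Suc q))), Tau] x t"
  by (subst pdx_add) (simp_all add: Wc_diff dG2a[OF qN, simplified] dG2b[OF qN])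

lemma final_eqs:
  "hirota 2 0 (wron_f N \<phi>) (wron_g N \<phi>) x t
        = (- A (N - 1) (N - 1)) * wron_f N \<phi> x t * wron_g N \<phi> x t
    \<and> hirota 3 0 (wron_f N \<phi>) (wron_g N \<phi>) x t + hirota 0 1 (wron_f N \<phi>) (wron_g N \<phi>) x t
        + 3 * (- A (N - 1) (N - 1)) * hirota 1 0 (wron_f N \<phi>) (wron_g N \<phi>) x t = 0"
proof -
  let ?f = "W q [C q, C (Suc q)] x t" and ?g = "W q [C q, Tau] x t"
  let ?F1 = "W q [C q, C (Suc (Suc q))] x t" and ?G1 = "W q [C (Suc q), Tau] x t"
  let ?F2a = "W q [C (Suc q), C (Suc (Suc q))] x t" and ?F2b = "W q [C q, C (Suc (Suc (Suc q)))] x t"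
  let ?G2a = "W (q - 1) [C q, C (Suc q), Tau] x t" and ?G2b = "W q [C (Suc (Suc q)), Tau] x t"
  let ?F3a = "W (q - 1) [C q, C (Suc q), C (Suc (Suc q))] x t" and ?F3b = "W q [C (Suc q), C (Suc (Suc (Suc q)))] x t"
    and ?F3c = "W q [C q, C (Suc (Suc (Suc (Suc q))))] x t"
  let ?G3a = "W (q - 2) [C (q - 1), C q, C (Suc q), Tau] x t" and ?G3b = "W (q - 1) [C q, C (Suc (Suc q)), Tau] x t"
    and ?G3c = "W q [C (Suc (Suc (Suc q))), Tau] x t"
  have e20: "hirota 2 0 (wron_f N \<phi>) (wron_g N \<phi>) x t = (?F2a + ?F2b) * ?g - 2 * (?F1 * ?G1) + ?f * (?G2a + ?G2b)"
    unfolding hirota_def wf[OF qN] wg[OF qN] by (simp add: eval_nat_numeral FX1 FX2 GX1 GX2 algebra_simps)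
  have e30: "hirota 3 0 (wron_f N \<phi>) (wron_g N \<phi>) x t = (?F3a + 2 * ?F3b + ?F3c) * ?g - 3 * ((?F2a + ?F2b) * ?G1)
      + 3 * (?F1 * (?G2a + ?G2b)) - ?f * (?G3a + 2 * ?G3b + ?G3c)"
    unfolding hirota_def wf[OF qN] wg[OF qN] by (simp add: eval_nat_numeral FX1 FX2 GX1 GX2[simplified] FX3 GX3[simplified]) (simp add: algebra_simps)
  have e01: "hirota 0 1 (wron_f N \<phi>) (wron_g N \<phi>) x t = (- 4) * (?F3a - ?F3b + ?F3c) * ?g - ?f * ((- 4) * (?G3a - ?G3b + ?G3c))"
    unfolding hirota_def by (simp add: dtf[OF qN] dtg[OF qN]) (simp add: wf[OF qN] wg[OF qN] algebra_simps)
  have e10: "hirota 1 0 (wron_f N \<phi>) (wron_g N \<phi>) x t = ?F1 * ?g - ?f * ?G1"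
    unfolding hirota_def wf[OF qN] wg[OF qN] by (simp add: FX1 GX1 algebra_simps)
  have eq1: "(?F2a + ?F2b) * ?g - 2 * (?F1 * ?G1) + ?f * (?G2a + ?G2b) = - A (N - 1) (N - 1) * ?f * ?g"
    by (rule alg1[OF h1[OF qN] h3[OF qN] p1[OF qN]])
  have eq2: "(?F3a + 2 * ?F3b + ?F3c) * ?g - 3 * ((?F2a + ?F2b) * ?G1) + 3 * (?F1 * (?G2a + ?G2b))
     - ?f * (?G3a + 2 * ?G3b + ?G3c) + ((- 4) * (?F3a - ?F3b + ?F3c) * ?g - ?f * ((- 4) * (?G3a - ?G3b + ?G3c)))
     + 3 * (- A (N - 1) (N - 1)) * (?F1 * ?g - ?f * ?G1) = 0"
    by (rule alg2[OF h1[OF qN] h2[OF qN] h3[OF qN] h4[OF qN] p2[OF qN] p3[OF qN]])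
  show ?thesis
    unfolding e20 e30 e01 e10 using eq1 eq2 unfolding wf[OF qN] wg[OF qN] by simp
qed

end
end

theorem theorem3p2p1:
  fixes N :: nat and A :: "nat \<Rightarrow> nat \<Rightarrow> complex"
    and \<phi> :: "nat \<Rightarrow> real \<Rightarrow> real \<Rightarrow> complex"
  assumes N2: "N \<ge> 2"
    and lower: "\<And>i j. i < N \<Longrightarrow> j < N \<Longrightarrow> i < j \<Longrightarrow> A i j = 0"
    and smooth: "\<And>i. i < N \<Longrightarrow> smooth2 (\<phi> i)"
    and eq_x: "\<And>i x t. i < N \<Longrightarrow> pdx (pdx (\<phi> i)) x t = - (\<Sum>j<N. A i j * \<phi> j x t)"
    and eq_t: "\<And>i x t. i < N \<Longrightarrow> pdt (\<phi> i) x t = - 4 * pdx (pdx (pdx (\<phi> i))) x t"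
  shows "\<forall>x t.
      hirota 2 0 (wron_f N \<phi>) (wron_g N \<phi>) x t
        = (- A (N - 1) (N - 1)) * wron_f N \<phi> x t * wron_g N \<phi> x t
    \<and> hirota 3 0 (wron_f N \<phi>) (wron_g N \<phi>) x t + hirota 0 1 (wron_f N \<phi>) (wron_g N \<phi>) x t
        + 3 * (- A (N - 1) (N - 1)) * hirota 1 0 (wron_f N \<phi>) (wron_g N \<phi>) x t = 0"
proof (intro allI)
  fix x t
  interpret bt N A \<phi> by unfold_locales (use assms in auto)
  obtain q where qN: "N = Suc (Suc q)" using N2 by (metis add_2_eq_Suc le_Suc_ex)
  show "hirota 2 0 (wron_f N \<phi>) (wron_g N \<phi>) x t
        = (- A (N - 1) (N - 1)) * wron_f N \<phi> x t * wron_g N \<phi> x t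
    \<and> hirota 3 0 (wron_f N \<phi>) (wron_g N \<phi>) x t + hirota 0 1 (wron_f N \<phi>) (wron_g N \<phi>) x t
        + 3 * (- A (N - 1) (N - 1)) * hirota 1 0 (wron_f N \<phi>) (wron_g N \<phi>) x t = 0"
    by (rule final_eqs[OF qN])
qed

end
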